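(* Let $\Omega\subset\mathbb{R}^2$ be compact with non-empty interior and let $G=\frac{1}{\mathrm{Area}(\Omega)}\int_\Omega y\,dy$ be its barycenter. Then for every $\varepsilon>0$ there exists $H>0$ such that for every $h\ge H$, every solid angle center of $\Omega$ of height $h$ lies at distance less than $\varepsilon$ from $G$. In other words, solid angle centers of height $h$ converge to the barycenter of $\Omega$ as $h\to+\infty$.
   Context: For a compact $\Omega\subset\mathbb{R}^2$ with non-empty interior, $h>0$ and $x\in\mathbb{R}^2$, $A_\Omega^{(h)}(x)=\int_\Omega \frac{h}{(|y-x|^2+h^2)^{3/2}}\,dy$. A point $x$ is a solid angle center of $\Omega$ of height $h$ if it maximizes $A_\Omega^{(h)}$ over $\mathbb{R}^2$. $\mathrm{Area}$ denotes Lebesgue measure. *)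

theory Defs
  imports "HOL-Analysis.Analysis"
begin

definition solid_angle :: "(real^2) set \<Rightarrow> real \<Rightarrow> real^2 \<Rightarrow> real" where
  "solid_angle \<Omega> h x =
     (LINT y:\<Omega>|lebesgue. h / ((norm (y - x))\<^sup>2 + h\<^sup>2) powr (3/2))"

definition solid_angle_center :: "(real^2) set \<Rightarrow> real \<Rightarrow> real^2 \<Rightarrow> bool" where
  "solid_angle_center \<Omega> h x \<longleftrightarrow> (\<forall>z. solid_angle \<Omega> h z \<le> solid_angle \<Omega> h x)"

definition barycenter :: "(real^2) set \<Rightarrow> real^2" where
  "barycenter \<Omega> = (1 / measure lebesgue \<Omega>) *\<^sub>R (LINT y:\<Omega>|lebesgue. y)"

end

theory Submission
  imports Defs
begin

lemma powr32: "(x::real) > 0 \<Longrightarrow> x powr (3/2) = x * sqrt x"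
proof -
  assume x: "x > 0"
  have "x powr (3/2) = x powr (1 + 1/2)" by simp
  also have "\<dots> = x * x powr (1/2)" using x powr_add[of x 1 "1/2"] by simp
  also have "\<dots> = x * sqrt x" using x by (simp add: powr_half_sqrt)
  finally show ?thesis .
qed

lemma ker_s:
  fixes h a :: real assumes h: "h > 0" and a: "a \<ge> 0"
  obtains s where "s \<ge> h" "s\<^sup>2 = a + h\<^sup>2" "h / (a + h\<^sup>2) powr (3/2) = h / s^3"
proof -
  define s where "s = sqrt (a + h\<^sup>2)"
  have pos: "a + h\<^sup>2 > 0" using h a by (simp add: add_nonneg_pos)
  have s2: "s\<^sup>2 = a + h\<^sup>2" unfolding s_def using pos by simp
  have sh: "s \<ge> h" unfolding s_def using a h by (simp add: real_le_rsqrt)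
  have "(a + h\<^sup>2) powr (3/2) = s^3" using powr32[OF pos] s2
    by (simp add: s_def power3_eq_cube power2_eq_square)
  then show ?thesis using that sh s2 by simp
qed

lemma ker_lower:
  fixes h a :: real assumes h: "h > 0" and a: "a \<ge> 0"
  shows "1/h^2 - 3/2 * a / h^4 \<le> h / (a + h\<^sup>2) powr (3/2)"
proof -
  obtain s where sh: "s \<ge> h" and s2: "s\<^sup>2 = a + h\<^sup>2" and k: "h / (a + h\<^sup>2) powr (3/2) = h / s^3"
    using ker_s[OF h a] by blast
  have spos: "s > 0" using sh h by simp
  have aeq: "a = s^2 - h^2" using s2 by simp
  have lhs: "1/h^2 - 3/2 * a / h^4 = (5/2*h^2 - 3/2* s^2) / h^4"
    using h unfolding aeq by (simp add: field_simps power4_eq_xxxx power2_eq_square)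
  have fac: "2*h^5 - 5*h^2* s^3 + 3* s^5 = (s-h)^2 * (3* s^3+6* s^2*h+4* s*h^2+2*h^3)"
    by algebra
  have "0 \<le> (s-h)^2 * (3* s^3+6* s^2*h+4* s*h^2+2*h^3)"
    using spos h by (intro mult_nonneg_nonneg) auto
  moreover have "h^5 - (5/2*h^2 - 3/2* s^2) * s^3 = (2*h^5 - 5*h^2* s^3 + 3* s^5)/2" by algebra
  ultimately have poly: "(5/2*h^2 - 3/2* s^2) * s^3 \<le> h^5" using fac by simp
  have "(5/2*h^2 - 3/2* s^2) \<le> h^5 / s^3" using poly spos by (simp add: pos_le_divide_eq)
  also have "h^5 / s^3 = (h / s^3) * h^4" by (simp add: power_Suc[symmetric] del: power_Suc)
  finally have "(5/2*h^2 - 3/2* s^2) / h^4 \<le> h / s^3"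
    using h by (simp add: pos_divide_le_eq)
  then show ?thesis unfolding lhs k .
qed

lemma ker_upper:
  fixes h a :: real assumes h: "h > 0" and a: "a \<ge> 0"
  shows "h / (a + h\<^sup>2) powr (3/2) \<le> 1/h^2 - 3/2 * a / h^4 + 15/8 * a^2 / h^6"
proof -
  obtain s where sh: "s \<ge> h" and s2: "s\<^sup>2 = a + h\<^sup>2" and k: "h / (a + h\<^sup>2) powr (3/2) = h / s^3"
    using ker_s[OF h a] by blast
  have spos: "s > 0" using sh h by simp
  have aeq: "a = s^2 - h^2" using s2 by simp
  have rhs: "1/h^2 - 3/2 * a / h^4 + 15/8 * a^2 / h^6 = (35*h^4 - 42* s^2*h^2 + 15* s^4) / (8*h^6)"
    using h unfolding aeq by (simp add: field_simps, algebra)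
  have fac: "15* s^7 - 42* s^5*h^2 + 35* s^3*h^4 - 8*h^7 = (s-h)^3 * (15* s^4+45* s^3*h+48* s^2*h^2+24* s*h^3+8*h^4)"
    by algebra
  have "0 \<le> (s-h)^3 * (15* s^4+45* s^3*h+48* s^2*h^2+24* s*h^3+8*h^4)"
    using spos h sh by (intro mult_nonneg_nonneg) auto
  hence poly: "8*h^7 \<le> (35*h^4 - 42* s^2*h^2 + 15* s^4) * s^3" using fac by (simp add: algebra_simps)
  have "(h / s^3) * (8*h^6) = (8*h^7) / s^3" by (simp add: power_Suc[symmetric] del: power_Suc)
  also have "\<dots> \<le> (35*h^4 - 42* s^2*h^2 + 15* s^4)" using poly spos by (simp add: pos_divide_le_eq)
  finally have "h / s^3 \<le> (35*h^4 - 42* s^2*h^2 + 15* s^4) / (8*h^6)"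
    using h by (simp add: pos_le_divide_eq)
  then show ?thesis unfolding rhs k .
qed

lemma ker_far:
  fixes h a R :: real assumes h: "h > 0" and a: "a \<ge> 4*R^2" and hR: "h^2 \<ge> 4*R^2"
  shows "h / (a + h\<^sup>2) powr (3/2) \<le> 1/h^2 - 2*R^2 / h^4"
proof -
  have a0: "a \<ge> 0" using a by (smt (verit) zero_le_power2)
  obtain s where sh: "s \<ge> h" and s2: "s\<^sup>2 = a + h\<^sup>2" and k: "h / (a + h\<^sup>2) powr (3/2) = h / s^3"
    using ker_s[OF h a0] by blast
  have spos: "s > 0" using sh h by simp
  have "h / s^3 \<le> 1 / s^2"
    using sh spos h by (simp add: field_simps power2_eq_square power3_eq_cube mult_right_mono)
  also have "\<dots> = 1/(a+h^2)" using s2 by simp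
  also have "\<dots> \<le> 1/(4*R^2 + h^2)"
  proof -
    have "0 < 4*R^2 + h^2" "0 < a + h^2" using h a0 by (auto intro: add_nonneg_pos)
    then show ?thesis using a by (intro divide_left_mono) auto
  qed
  also have "\<dots> \<le> 1/h^2 - 2*R^2 / h^4"
  proof -
    have p: "0 < 4*R^2 + h^2" using h by (simp add: add_nonneg_pos)
    have "h^4 \<le> (4*R^2 + h^2) * (h^2 - 2*R^2)"
    proof -
      have "(4*R^2 + h^2) * (h^2 - 2*R^2) - h^4 = 2*R^2*(h^2 - 4*R^2)" by algebra
      moreover have "0 \<le> 2*R^2*(h^2 - 4*R^2)" using hR by simp
      ultimately show ?thesis by linarith
    qed
    then show ?thesis using p h by (simp add: field_simps power4_eq_xxxx power2_eq_square)
  qed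
  finally show ?thesis by (simp only: k)
qed

lemma cont_set_integrable:
  fixes f :: "real^2 \<Rightarrow> 'b::euclidean_space"
  assumes S: "compact S" and f: "continuous_on UNIV f"
  shows "set_integrable lebesgue S f"
proof -
  obtain a where a: "S \<subseteq> cbox (-a) a"
    using bounded_subset_cbox_symmetric[OF compact_imp_bounded[OF S]] by blast
  have "f absolutely_integrable_on cbox (-a) a"
    by (rule absolutely_integrable_continuous) (use f continuous_on_subset in blast)
  moreover have "S \<in> sets lebesgue" using lmeasurable_compact[OF S] by (simp add: fmeasurableD)
  ultimately show ?thesis using a by (rule set_integrable_subset)
qed

lemma kern_cont:
  fixes h :: real and x :: "real^2" assumes h: "h > 0"
  shows "continuous_on UNIV (\<lambda>y. h / ((norm (y - x))\<^sup>2 + h\<^sup>2) powr (3/2))"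
proof -
  have pos: "\<And>y. (norm (y - x))\<^sup>2 + h\<^sup>2 > 0" using h by (simp add: add_nonneg_pos)
  show ?thesis
    by (intro continuous_intros) (use pos h in \<open>auto simp: less_imp_neq[symmetric]\<close>)
qed

lemma set_integral_inner_left':
  assumes "set_integrable M A f"
  shows "(LINT y:A|M. f y \<bullet> c) = (LINT y:A|M. f y) \<bullet> c"
  using assms unfolding set_lebesgue_integral_def set_integrable_def
  by (subst integral_inner_left[symmetric]) (auto simp: inner_scaleR_left)

lemma norm_sq_expand:
  fixes y x G :: "real^2"
  shows "(norm (y - x))\<^sup>2 = (norm (y - G))\<^sup>2 + 2 * ((y - G) \<bullet> (G - x)) + (norm (G - x))\<^sup>2"
proof -
  have "y - x = (y - G) + (G - x)" by simp
  then have "(norm (y - x))\<^sup>2 = (norm ((y - G) + (G - x)))\<^sup>2" by metis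
  also have "\<dots> = (norm (y - G))\<^sup>2 + 2 * ((y - G) \<bullet> (G - x)) + (norm (G - x))\<^sup>2"
    by (simp only: power2_norm_eq_inner inner_add_left inner_add_right) (simp add: inner_commute)
  finally show ?thesis .
qed

theorem theorem3p2:
  fixes \<Omega> :: "(real^2) set"
  assumes "compact \<Omega>" and "interior \<Omega> \<noteq> {}"
  shows "\<forall>\<epsilon>>0. \<exists>H>0. \<forall>h\<ge>H. \<forall>x. solid_angle_center \<Omega> h x \<longrightarrow>
           dist x (barycenter \<Omega>) < \<epsilon>"
proof (intro allI impI)
  fix \<epsilon> :: real assume \<epsilon>: "\<epsilon> > 0"
  note cpt = assms(1)
  define G where "G = barycenter \<Omega>"
  define m where "m = measure lebesgue \<Omega>"
  have lm: "\<Omega> \<in> lmeasurable" using lmeasurable_compact[OF cpt] .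
  have sets: "\<Omega> \<in> sets lebesgue" using lm by (simp add: fmeasurableD)
  have fin: "emeasure lebesgue \<Omega> \<noteq> \<infinity>" using lm unfolding fmeasurable_def using less_imp_neq by blast
  have mpos: "m > 0"
  proof -
    obtain c where "c \<in> interior \<Omega>" using assms(2) by blast
    then obtain r where r: "r > 0" "ball c r \<subseteq> \<Omega>" using mem_interior by blast
    have "measure lebesgue (ball c r) = measure lborel (ball c r)"
      by (simp add: measure_completion)
    also have "\<dots> > 0" using content_ball_pos[OF r(1)] .
    finally have "0 < measure lebesgue (ball c r)" .
    also have "\<dots> \<le> m" unfolding m_def
      using r(2) lm by (intro measure_mono_fmeasurable) auto
    finally show ?thesis .
  qed
  obtain b where b: "b > 0" "\<forall>y\<in>\<Omega>. norm y \<le> b"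
    using compact_imp_bounded[OF cpt] unfolding bounded_pos by blast
  define R where "R = b + norm G"
  have Rpos: "R > 0" unfolding R_def using b by (simp add: add_pos_nonneg)
  have yG: "norm (y - G) \<le> R" if "y \<in> \<Omega>" for y
    using b that norm_triangle_ineq4[of y G] unfolding R_def by fastforce
  have int_id: "set_integrable lebesgue \<Omega> (\<lambda>y. y)"
    by (rule cont_set_integrable[OF cpt]) (intro continuous_intros)
  have intY: "(LINT y:\<Omega>|lebesgue. y) = m *\<^sub>R G"
    unfolding G_def barycenter_def m_def using mpos m_def by simp
  have zero_mean: "(LINT y:\<Omega>|lebesgue. (y - G) \<bullet> w) = 0" for w
  proof -
    have "(LINT y:\<Omega>|lebesgue. (y - G) \<bullet> w) = (LINT y:\<Omega>|lebesgue. y - G) \<bullet> w"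
      by (rule set_integral_inner_left') (intro cont_set_integrable[OF cpt] continuous_intros)
    also have "(LINT y:\<Omega>|lebesgue. y - G) = (LINT y:\<Omega>|lebesgue. y) - (LINT y:\<Omega>|lebesgue. G)"
      by (rule set_integral_diff(2)[OF int_id]) (intro cont_set_integrable[OF cpt] continuous_intros)
    also have "(LINT y:\<Omega>|lebesgue. G) = m *\<^sub>R G"
      unfolding m_def using sets fin by (rule set_integral_const)
    finally show ?thesis using intY by simp
  qed
  define H where "H = 2*R + 40*R^2/\<epsilon>"
  show "\<exists>H>0. \<forall>h\<ge>H. \<forall>x. solid_angle_center \<Omega> h x \<longrightarrow> dist x (barycenter \<Omega>) < \<epsilon>"
  proof (intro exI conjI allI impI)
    show "H > 0" unfolding H_def using Rpos \<epsilon> by (simp add: add_pos_nonneg)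
    fix h x assume hH: "H \<le> h" and cen: "solid_angle_center \<Omega> h x"
    have nn: "40*R^2/\<epsilon> \<ge> 0" using \<epsilon> by simp
    have h2R: "2*R \<le> h" and hR2: "40*R^2/\<epsilon> \<le> h" using hH Rpos nn unfolding H_def by linarith+
    have h: "h > 0" using h2R Rpos by simp
    have hsq: "h^2 \<ge> 4*R^2"
    proof -
      have "(2*R)^2 \<le> h^2" using h2R Rpos by (intro power_mono) auto
      then show ?thesis by (simp add: power_mult_distrib)
    qed
    define k where "k = (\<lambda>z y::real^2. h / ((norm (y - z))\<^sup>2 + h\<^sup>2) powr (3/2))"
    have kint: "set_integrable lebesgue \<Omega> (k z)" for z
      unfolding k_def by (rule cont_set_integrable[OF cpt kern_cont[OF h]])
    have le: "solid_angle \<Omega> h G \<le> solid_angle \<Omega> h x"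
      using cen unfolding solid_angle_center_def by blast
    have diff: "solid_angle \<Omega> h G - solid_angle \<Omega> h x = (LINT y:\<Omega>|lebesgue. k G y - k x y)"
      unfolding solid_angle_def k_def using kint[unfolded k_def]
      by (simp add: set_integral_diff(2))
    show "dist x (barycenter \<Omega>) < \<epsilon>"
    proof (rule ccontr)
      assume "\<not> dist x (barycenter \<Omega>) < \<epsilon>"
      then have dge: "dist x G \<ge> \<epsilon>" unfolding G_def by simp
      define d where "d = dist x G"
      have dG: "norm (G - x) = d" unfolding d_def by (simp add: dist_norm norm_minus_commute)
      have "0 < solid_angle \<Omega> h G - solid_angle \<Omega> h x"
      proof (cases "d \<ge> 3*R")
        case True
        define c where "c = R^2 / (2*h^4)"
        have "\<forall>y\<in>\<Omega>. c \<le> k G y - k x y"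
        proof
          fix y assume y: "y \<in> \<Omega>"
          have "1/h^2 - 3/2 * R^2 / h^4 \<le> 1/h^2 - 3/2 * (norm (y - G))\<^sup>2 / h^4"
          proof -
            have "(norm (y - G))\<^sup>2 \<le> R^2" using yG[OF y] by (intro power_mono) auto
            then show ?thesis using h by (simp add: divide_right_mono)
          qed
          also have "\<dots> \<le> k G y" unfolding k_def by (rule ker_lower[OF h]) simp
          finally have lo: "1/h^2 - 3/2 * R^2 / h^4 \<le> k G y" .
          have "norm (y - x) \<ge> 2*R"
            using norm_triangle_ineq4[of "y - x" "y - G"] yG[OF y] True dG
            by (simp add: norm_minus_commute)
          then have "(norm (y - x))\<^sup>2 \<ge> (2*R)^2" using Rpos by (intro power_mono) auto
          then have "(norm (y - x))\<^sup>2 \<ge> 4*R^2" by (simp add: power_mult_distrib)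
          then have up: "k x y \<le> 1/h^2 - 2*R^2 / h^4" unfolding k_def
            by (rule ker_far[OF h _ hsq])
          show "c \<le> k G y - k x y" using lo up unfolding c_def by (simp add: field_simps)
        qed
        then have "(LINT y:\<Omega>|lebesgue. c) \<le> (LINT y:\<Omega>|lebesgue. k G y - k x y)"
          by (intro set_integral_mono) (auto intro: kint set_integral_diff(1) cont_set_integrable[OF cpt])
        moreover have "(LINT y:\<Omega>|lebesgue. c) = m * c"
          unfolding m_def using set_integral_const[OF sets fin, of c] by (simp only: real_scaleR_def)
        moreover have "m * c > 0" unfolding c_def using mpos Rpos h by simp
        ultimately show ?thesis using diff by simp
      next
        case False
        define C where "C = 3/(2*h^4) * d^2 - 480*R^4/h^6"
        define g where "g = (\<lambda>y. C + 3/h^4 * ((y - G) \<bullet> (G - x)))"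
        have pw: "g y \<le> k G y - k x y" if y: "y \<in> \<Omega>" for y
        proof -
          have lo: "1/h^2 - 3/2 * (norm (y - G))\<^sup>2 / h^4 \<le> k G y"
            unfolding k_def by (rule ker_lower[OF h]) simp
          have up: "k x y \<le> 1/h^2 - 3/2 * (norm (y - x))\<^sup>2 / h^4 + 15/8 * ((norm (y - x))\<^sup>2)^2 / h^6"
            unfolding k_def by (rule ker_upper[OF h]) simp
          have "norm (y - x) \<le> norm (y - G) + norm (G - x)"
            using norm_triangle_ineq[of "y - G" "G - x"] by simp
          then have "norm (y - x) \<le> 4*R" using yG[OF y] dG False by simp
          then have "(norm (y - x))\<^sup>2 \<le> (4*R)^2" by (intro power_mono) auto
          then have "((norm (y - x))\<^sup>2)^2 \<le> ((4*R)^2)^2" by (rule power_mono) auto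
          then have "15/8 * ((norm (y - x))\<^sup>2)^2 / h^6 \<le> 15/8 * ((4*R)^2)^2 / h^6"
            using h by (intro divide_right_mono mult_left_mono) auto
          also have "\<dots> = 480*R^4/h^6" by (simp add: power_mult_distrib)
          finally have q: "15/8 * ((norm (y - x))\<^sup>2)^2 / h^6 \<le> 480*R^4/h^6" .
          have ex: "(norm (y - x))\<^sup>2 = (norm (y - G))\<^sup>2 + 2 * ((y - G) \<bullet> (G - x)) + d^2"
            using norm_sq_expand[of y x G] dG by simp
          have "g y = 3/2 * ((norm (y - x))\<^sup>2 - (norm (y - G))\<^sup>2) / h^4 - 480*R^4/h^6"
            unfolding g_def C_def ex using h by (simp add: field_simps)
          then show ?thesis using lo up q by (simp add: diff_divide_distrib)
        qed
        have gint: "set_integrable lebesgue \<Omega> g"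
          unfolding g_def by (intro cont_set_integrable[OF cpt] continuous_intros)
        have "(LINT y:\<Omega>|lebesgue. g y) \<le> (LINT y:\<Omega>|lebesgue. k G y - k x y)"
          using pw by (intro set_integral_mono gint) (auto intro: kint set_integral_diff(1))
        moreover have "(LINT y:\<Omega>|lebesgue. g y) = m * C"
        proof -
          have i1: "set_integrable lebesgue \<Omega> (\<lambda>y. C)"
            by (intro cont_set_integrable[OF cpt] continuous_intros)
          have i2: "set_integrable lebesgue \<Omega> (\<lambda>y. 3/h^4 * ((y - G) \<bullet> (G - x)))"
            by (intro cont_set_integrable[OF cpt] continuous_intros)
          have "(LINT y:\<Omega>|lebesgue. g y) = (LINT y:\<Omega>|lebesgue. C) + (LINT y:\<Omega>|lebesgue. 3/h^4 * ((y - G) \<bullet> (G - x)))"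
            unfolding g_def by (rule set_integral_add(2)[OF i1 i2])
          also have "(LINT y:\<Omega>|lebesgue. 3/h^4 * ((y - G) \<bullet> (G - x))) = 0"
            using zero_mean[of "G - x"] by simp
          also have "(LINT y:\<Omega>|lebesgue. C) = m * C"
            unfolding m_def using set_integral_const[OF sets fin, of C] by (simp only: real_scaleR_def)
          finally show ?thesis by simp
        qed
        moreover have "C > 0"
        proof -
          have "40*R^2 \<le> h * \<epsilon>" using hR2 \<epsilon> by (simp add: pos_divide_le_eq mult.commute)
          also have "\<dots> \<le> h * d" using dge h unfolding d_def by (intro mult_left_mono) auto
          finally have "(40*R^2)^2 \<le> (h*d)^2" using Rpos by (intro power_mono) auto
          then have "1600*R^4 \<le> h^2 * d^2" by (simp add: power_mult_distrib)
          moreover have "0 < R^4" using Rpos by simp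
          moreover have "h^2*d^2 = d^2*h^2" by simp
          ultimately have "0 < 3/2 * d^2 * h^2 - 480*R^4" by linarith
          moreover have "C = (3/2 * d^2 * h^2 - 480*R^4) / h^6"
            unfolding C_def using h by (simp add: field_simps)
          ultimately show ?thesis using h by simp
        qed
        ultimately show ?thesis using diff mpos
          by (smt (verit) mult_pos_pos)
      qed
      then show False using le by simp
    qed
  qed
qed

end
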